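(* Let $n\geq4$ with $n\not\equiv 0 \pmod 3$, let $R=K[x_1,\ldots,x_n]$ with $\mathfrak m=(x_1,\ldots,x_n)$, and let $I_n=NI(C_n)=(x_{i-1}x_ix_{i+1}: i=1,\ldots,n)$ (indices modulo $n$) be the closed neighborhood ideal of the $n$-cycle. Then $\mathrm{depth}(R/I_n^{\,n-1})=0$. In particular, $\mathfrak m\in\mathrm{Ass}(R/I_n^{\,n-1})$ and $\lim_{k\to\infty}\mathrm{depth}(R/I_n^k)=0$.
   Context: $C_n$ is the cycle with vertices $1,\ldots,n$ and edges $\{i,i+1\}$ ($1\le i\le n-1$) and $\{n,1\}$. For a simple graph $G$, $N_G[i]=\{j:\{i,j\}\in E(G)\}\cup\{i\}$ and $NI(G)=(\prod_{j\in N_G[i]}x_j : i\in V(G))$. *)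

theory Defs
  imports "HOL-Library.Poly_Mapping" "HOL-Library.Extended_Real"
begin

text \<open>Polynomials over K in variables indexed by naturals: (nat =>0 nat) =>0 K.
 The ring R = K[x_1,...,x_n] is the subring of polynomials involving only x_1..x_n.\<close>

type_synonym 'a mpoly = "(nat \<Rightarrow>\<^sub>0 nat) \<Rightarrow>\<^sub>0 'a"

definition var :: "nat \<Rightarrow> 'a::comm_ring_1 mpoly" where
  "var i = Poly_Mapping.single (Poly_Mapping.single i 1) 1"

definition polyring :: "nat \<Rightarrow> 'a::comm_ring_1 mpoly set" where
  "polyring n = {p::'a mpoly. \<forall>m\<in>Poly_Mapping.keys p. Poly_Mapping.keys m \<subseteq> {1..n}}"

definition ideal_gen :: "nat \<Rightarrow> 'a::comm_ring_1 mpoly set \<Rightarrow> 'a mpoly set" where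
  "ideal_gen n G = {(\<Sum>g\<in>F. r g * g) | F r. finite F \<and> F \<subseteq> G \<and> (\<forall>g\<in>F. r g \<in> polyring n)}"

definition ideal_pow :: "nat \<Rightarrow> 'a::comm_ring_1 mpoly set \<Rightarrow> nat \<Rightarrow> 'a mpoly set" where
  "ideal_pow n I k = ideal_gen n {(\<Prod>i<k. f i) | f. \<forall>i<k. f i \<in> I}"

definition max_ideal :: "nat \<Rightarrow> 'a::comm_ring_1 mpoly set" where
  "max_ideal n = ideal_gen n (var ` {1..n})"

definition cycle_edge :: "nat \<Rightarrow> nat \<Rightarrow> nat \<Rightarrow> bool" where
  "cycle_edge n i j \<longleftrightarrow> i \<in> {1..n} \<and> j \<in> {1..n} \<and>
     ((j = i + 1 \<and> i \<le> n - 1) \<or> (i = j + 1 \<and> j \<le> n - 1) \<or>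
      (i = n \<and> j = 1) \<or> (i = 1 \<and> j = n))"

definition closed_nbhd :: "nat \<Rightarrow> nat \<Rightarrow> nat set" where
  "closed_nbhd n i = {j. cycle_edge n i j} \<union> {i}"

definition NI_cycle :: "nat \<Rightarrow> 'a::comm_ring_1 mpoly set" where
  "NI_cycle n = ideal_gen n ((\<lambda>i. \<Prod>j\<in>closed_nbhd n i. var j) ` {1..n})"

definition nonzerodiv_mod :: "nat \<Rightarrow> 'a::comm_ring_1 mpoly set \<Rightarrow> 'a mpoly \<Rightarrow> bool" where
  "nonzerodiv_mod n J f \<longleftrightarrow> (\<forall>g\<in>polyring n. f * g \<in> J \<longrightarrow> g \<in> J)"

definition regular_seq :: "nat \<Rightarrow> 'a::comm_ring_1 mpoly set \<Rightarrow> 'a mpoly list \<Rightarrow> bool" where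
  "regular_seq n J fs \<longleftrightarrow> set fs \<subseteq> max_ideal n \<and>
     (\<forall>i<length fs. nonzerodiv_mod n (ideal_gen n (J \<union> set (take i fs))) (fs ! i)) \<and>
     1 \<notin> ideal_gen n (J \<union> set fs)"

definition depth :: "nat \<Rightarrow> 'a::comm_ring_1 mpoly set \<Rightarrow> enat" where
  "depth n J = Sup {enat (length fs) | fs. regular_seq n J fs}"

definition prime_ideal :: "nat \<Rightarrow> 'a::comm_ring_1 mpoly set \<Rightarrow> bool" where
  "prime_ideal n P \<longleftrightarrow> ideal_gen n P = P \<and> P \<noteq> polyring n \<and>
     (\<forall>a\<in>polyring n. \<forall>b\<in>polyring n. a * b \<in> P \<longrightarrow> a \<in> P \<or> b \<in> P)"

definition Ass :: "nat \<Rightarrow> 'a::comm_ring_1 mpoly set \<Rightarrow> 'a mpoly set set" where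
  "Ass n J = {P. prime_ideal n P \<and> (\<exists>g\<in>polyring n. P = {f\<in>polyring n. f * g \<in> J})}"

end

theory Submission imports Defs "HOL-Number_Theory.Cong" begin

lemma var_polyring: "i \<in> {1..n} \<Longrightarrow> (var i :: 'a::comm_ring_1 mpoly) \<in> polyring n"
  by (simp add: var_def polyring_def)

lemma one_polyring: "(1::'a::comm_ring_1 mpoly) \<in> polyring n"
  by (simp add: polyring_def)

lemma zero_polyring: "(0::'a::comm_ring_1 mpoly) \<in> polyring n"
  by (simp add: polyring_def)

lemma keys_add_pm: "Poly_Mapping.keys ((m::nat \<Rightarrow>\<^sub>0 nat) + m') = Poly_Mapping.keys m \<union> Poly_Mapping.keys m'"
  by (auto simp: in_keys_iff lookup_add)

lemma add_polyring: assumes "p \<in> polyring n" "q \<in> polyring n" shows " (p + q :: 'a::comm_ring_1 mpoly) \<in> polyring n"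
  proof -
  have "m \<in> Poly_Mapping.keys p \<union> Poly_Mapping.keys q" if "m \<in> Poly_Mapping.keys (p + q)" for m
    using keys_add[of p q] that by (rule subsetD)
  then show ?thesis using assms unfolding polyring_def by auto
qed

lemma mult_polyring: "p \<in> polyring n \<Longrightarrow> q \<in> polyring n \<Longrightarrow> (p * q :: 'a::comm_ring_1 mpoly) \<in> polyring n"
  unfolding polyring_def using keys_mult[of p q] by (fastforce simp: keys_add_pm)

lemma sum_polyring: "(\<And>x. x \<in> S \<Longrightarrow> f x \<in> polyring n) \<Longrightarrow> (sum f S :: 'a::comm_ring_1 mpoly) \<in> polyring n"
  by (induction S rule: infinite_finite_induct) (auto simp: zero_polyring add_polyring)

lemma prod_polyring: "(\<And>x. x \<in> S \<Longrightarrow> f x \<in> polyring n) \<Longrightarrow> (prod f S :: 'a::comm_ring_1 mpoly) \<in> polyring n"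
  by (induction S rule: infinite_finite_induct) (auto simp: one_polyring mult_polyring)

lemma pow_polyring: "p \<in> polyring n \<Longrightarrow> (p ^ k :: 'a::comm_ring_1 mpoly) \<in> polyring n"
  proof (induction k)
  case 0 then show ?case by (simp add: one_polyring)
next
  case (Suc k) then show ?case by (simp add: mult_polyring)
qed

lemma ig_zero: "0 \<in> ideal_gen n G"
  unfolding ideal_gen_def by (rule CollectI, rule exI[of _ "{}"], auto)

lemma ig_gen: "g \<in> G \<Longrightarrow> r \<in> polyring n \<Longrightarrow> r * g \<in> ideal_gen n G"
  unfolding ideal_gen_def
  by (rule CollectI, rule exI[of _ "{g}"], rule exI[of _ "\<lambda>_. r"], auto)

lemma ig_base: "g \<in> G \<Longrightarrow> g \<in> ideal_gen n G"
  using ig_gen[OF _ one_polyring, of g G n] by simp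

lemma ig_add:
  assumes "p \<in> ideal_gen n G" "q \<in> ideal_gen n G"
  shows "p + q \<in> ideal_gen n G"
proof -
  obtain F1 r1 where 1: "p = (\<Sum>g\<in>F1. r1 g * g)" "finite F1" "F1 \<subseteq> G" "\<forall>g\<in>F1. r1 g \<in> polyring n"
    using assms(1) unfolding ideal_gen_def by blast
  obtain F2 r2 where 2: "q = (\<Sum>g\<in>F2. r2 g * g)" "finite F2" "F2 \<subseteq> G" "\<forall>g\<in>F2. r2 g \<in> polyring n"
    using assms(2) unfolding ideal_gen_def by blast
  define r where "r g = (if g \<in> F1 then r1 g else 0) + (if g \<in> F2 then r2 g else 0)" for g
  have "(\<Sum>g\<in>F1 \<union> F2. (if g \<in> F1 then r1 g else 0) * g) = p"
    unfolding 1 by (rule sum.mono_neutral_cong_right) (use 1 2 in auto)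
  moreover have "(\<Sum>g\<in>F1 \<union> F2. (if g \<in> F2 then r2 g else 0) * g) = q"
    unfolding 2 by (rule sum.mono_neutral_cong_right) (use 1 2 in auto)
  ultimately have "p + q = (\<Sum>g\<in>F1 \<union> F2. r g * g)"
    unfolding r_def distrib_right sum.distrib by simp
  moreover have "\<forall>g\<in>F1 \<union> F2. r g \<in> polyring n"
    using 1 2 by (auto simp: r_def add_polyring zero_polyring)
  ultimately show ?thesis using 1 2 unfolding ideal_gen_def
    by (intro CollectI exI[of _ "F1 \<union> F2"] exI[of _ r]) simp
qed

lemma ig_sum: "(\<And>x. x \<in> S \<Longrightarrow> f x \<in> ideal_gen n G) \<Longrightarrow> sum f S \<in> ideal_gen n G"
  by (induction S rule: infinite_finite_induct) (auto simp: ig_zero ig_add)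

lemma ig_mult:
  assumes "p \<in> ideal_gen n G" "r \<in> polyring n"
  shows "r * p \<in> ideal_gen n G"
proof -
  obtain F1 r1 where 1: "p = (\<Sum>g\<in>F1. r1 g * g)" "finite F1" "F1 \<subseteq> G" "\<forall>g\<in>F1. r1 g \<in> polyring n"
    using assms(1) unfolding ideal_gen_def by blast
  have "r * p = (\<Sum>g\<in>F1. (r * r1 g) * g)" using 1 by (simp add: sum_distrib_left mult.assoc)
  moreover have "\<forall>g\<in>F1. r * r1 g \<in> polyring n" using 1 assms(2) by (auto simp: mult_polyring)
  ultimately show ?thesis using 1 unfolding ideal_gen_def
    by (intro CollectI exI[of _ F1] exI[of _ "\<lambda>g. r * r1 g"]) simp
qed

lemma ig_polyring: "G \<subseteq> polyring n \<Longrightarrow> ideal_gen n G \<subseteq> polyring n"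
  unfolding ideal_gen_def by (auto intro!: sum_polyring mult_polyring)

definition tdeg :: "(nat \<Rightarrow>\<^sub>0 nat) \<Rightarrow> nat" where
  "tdeg m = (\<Sum>k\<in>Poly_Mapping.keys m. Poly_Mapping.lookup m k)"

lemma tdeg_add: "tdeg (a + b) = tdeg a + tdeg b"
  unfolding tdeg_def by (rule setsum_keys_plus_distrib) auto

lemma tdeg_single: "tdeg (Poly_Mapping.single i 1) = 1"
  unfolding tdeg_def by simp

definition geq :: "nat \<Rightarrow> 'a::comm_ring_1 mpoly \<Rightarrow> bool" where
  "geq d p \<longleftrightarrow> (\<forall>m\<in>Poly_Mapping.keys p. d \<le> tdeg m)"

definition hom :: "nat \<Rightarrow> 'a::comm_ring_1 mpoly \<Rightarrow> bool" where
  "hom d p \<longleftrightarrow> (\<forall>m\<in>Poly_Mapping.keys p. tdeg m = d)"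

lemma geq_add: assumes "geq d p" "geq d q" shows "geq d (p + q)"
proof -
  have "m \<in> Poly_Mapping.keys p \<union> Poly_Mapping.keys q" if "m \<in> Poly_Mapping.keys (p + q)" for m
    using keys_add[of p q] that by (rule subsetD)
  then show ?thesis using assms unfolding geq_def by auto
qed

lemma geq_zero: "geq d 0" by (simp add: geq_def)

lemma geq_sum: "(\<And>x. x \<in> S \<Longrightarrow> geq d (f x)) \<Longrightarrow> geq d (sum f S)"
  by (induction S rule: infinite_finite_induct) (auto simp: geq_zero geq_add)

lemma geq_mult: "geq a p \<Longrightarrow> geq b q \<Longrightarrow> geq (a + b) (p * q)"
  unfolding geq_def using keys_mult[of p q] by (fastforce simp: tdeg_add)

lemma geq_mult_left: "geq d q \<Longrightarrow> geq d (r * q)"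
  using geq_mult[of 0 r d q] by (simp add: geq_def)

lemma geq_ig: "(\<And>g. g \<in> G \<Longrightarrow> geq d g) \<Longrightarrow> p \<in> ideal_gen n G \<Longrightarrow> geq d p"
  unfolding ideal_gen_def by (auto intro!: geq_sum geq_mult_left)

lemma hom_mult: "hom a p \<Longrightarrow> hom b q \<Longrightarrow> hom (a + b) (p * q)"
  unfolding hom_def using keys_mult[of p q] by (fastforce simp: tdeg_add)

lemma hom_one: "hom 0 1" by (simp add: hom_def tdeg_def)

lemma hom_prod: "finite S \<Longrightarrow> (\<And>x. x \<in> S \<Longrightarrow> hom d (f x)) \<Longrightarrow> hom (d * card S) (prod f S)"
  by (induction S rule: finite_induct) (auto simp: hom_one hom_mult)

lemma hom_pow: "hom d p \<Longrightarrow> hom (d * k) (p ^ k)"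
  by (induction k) (auto simp: hom_one dest: hom_mult)

lemma hom_var: "hom 1 (var i)"
  using tdeg_single[of i] by (simp add: hom_def var_def)

lemma hom_geq: "hom d p \<Longrightarrow> geq d p" by (simp add: hom_def geq_def)


definition vx :: "nat \<Rightarrow> nat \<Rightarrow> nat" where "vx n r = r mod n + 1"

definition u :: "nat \<Rightarrow> nat \<Rightarrow> 'a::comm_ring_1 mpoly" where
  "u n r = var (vx n (r + n - 1)) * var (vx n r) * var (vx n (r + 1))"

lemma vx_mod: "vx n (r mod n + k) = vx n (r + k)"
  unfolding vx_def by (simp add: mod_add_left_eq)

lemma vx_range: "0 < n \<Longrightarrow> vx n r \<in> {1..n}"
  unfolding vx_def by (simp add: Suc_le_eq)

lemma u_mod: assumes "0 < n" shows "u n (r mod n) = u n r"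
proof -
  have "r mod n + n - 1 = r mod n + (n - 1)" "r + n - 1 = r + (n - 1)" using assms by auto
  then show ?thesis unfolding u_def using vx_mod[of n r "n - 1"] vx_mod[of n r 1] vx_mod[of n r 0]
    by simp
qed

definition prv :: "nat \<Rightarrow> nat \<Rightarrow> nat" where "prv n i = (if i = 1 then n else i - 1)"
definition nxt :: "nat \<Rightarrow> nat \<Rightarrow> nat" where "nxt n i = (if i = n then 1 else i + 1)"

lemma cycle_nbrs:
  assumes "n \<ge> 3" "i \<in> {1..n}"
  shows "{j. cycle_edge n i j} = {prv n i, nxt n i}"
  using assms unfolding cycle_edge_def prv_def nxt_def by auto

lemma closed_nbhd_eq:
  assumes "n \<ge> 3" "i \<in> {1..n}"
  shows "closed_nbhd n i = {prv n i, i, nxt n i}"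
  using cycle_nbrs[OF assms] unfolding closed_nbhd_def by auto

lemma gen_eq:
  assumes "n \<ge> 3" "i \<in> {1..n}"
  shows "(\<Prod>j\<in>closed_nbhd n i. var j) = (u n (i - 1) :: 'a::comm_ring_1 mpoly)"
proof -
  have d: "prv n i \<noteq> i" "nxt n i \<noteq> i" "prv n i \<noteq> nxt n i"
    using assms unfolding prv_def nxt_def by auto
  have a: "vx n (i - 1 + n - 1) = prv n i"
  proof (cases "i = 1")
    case True then show ?thesis using assms by (simp add: vx_def prv_def)
  next
    case False
    have e: "i - 1 + n - 1 = (i - 2) + n" using False assms by auto
    have "i - 2 < n" using assms by auto
    then have f: "((i - 2) + n) mod n = i - 2" by simp
    have g: "i - 2 + 1 = i - 1" using False assms by auto
    show ?thesis unfolding vx_def prv_def e f g using False by simp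
  qed
  have "i - 1 < n" using assms by auto
  then have b: "vx n (i - 1) = i" using assms by (simp add: vx_def)
  have c: "vx n (i - 1 + 1) = nxt n i"
  proof (cases "i = n")
    case True then show ?thesis using assms by (simp add: vx_def nxt_def)
  next
    case False then show ?thesis using assms by (simp add: vx_def nxt_def)
  qed
  show ?thesis unfolding closed_nbhd_eq[OF assms] u_def a b c using d
    by (simp add: mult_ac)
qed

lemma gens_eq:
  assumes "n \<ge> 3"
  shows "((\<lambda>i. \<Prod>j\<in>closed_nbhd n i. var j) ` {1..n} :: 'a::comm_ring_1 mpoly set) = u n ` {..<n}"
proof -
  have "((\<lambda>i. \<Prod>j\<in>closed_nbhd n i. var j) ` {1..n} :: 'a mpoly set) = (\<lambda>i. u n (i - 1)) ` {1..n}"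
    using gen_eq[OF assms] by (intro image_cong) auto
  also have "\<dots> = u n ` ((\<lambda>i. i - 1) ` {1..n})" by (simp add: image_image)
  also have "(\<lambda>i. i - 1) ` {1..n} = {..<n}"
  proof
    show "(\<lambda>i. i - 1) ` {1..n} \<subseteq> {..<n}" by auto
    show "{..<n} \<subseteq> (\<lambda>i. i - 1) ` {1..n}"
    proof
      fix r assume "r \<in> {..<n}"
      then have "r + 1 \<in> {1..n}" "r = (r + 1) - 1" by auto
      then show "r \<in> (\<lambda>i. i - 1) ` {1..n}" by blast
    qed
  qed
  finally show ?thesis .
qed

lemma NI_eq: assumes "n \<ge> 3" shows "NI_cycle n = ideal_gen n (u n ` {..<n})"
  unfolding NI_cycle_def gens_eq[OF assms] by (rule refl)

lemma u_NI: assumes "n \<ge> 3" shows "u n r \<in> NI_cycle n"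
proof -
  have "(u n (r mod n) :: 'a::comm_ring_1 mpoly) \<in> u n ` {..<n}" using assms by auto
  then have "(u n (r mod n) :: 'a mpoly) \<in> NI_cycle n" unfolding NI_eq[OF assms] by (rule ig_base)
  moreover have "(u n (r mod n) :: 'a mpoly) = u n r" using assms by (intro u_mod) auto
  ultimately show ?thesis by simp
qed

lemma hom_u: "hom 3 (u n r)"
proof -
  have "hom (1 + 1 + 1) (u n r)" unfolding u_def by (intro hom_mult hom_var)
  then show ?thesis by (simp add: numeral_3_eq_3)
qed

lemma var_nz: "(var i :: 'a::field mpoly) \<noteq> 0"
  unfolding var_def by (metis lookup_single_eq one_neq_zero lookup_zero)

lemma u_nz: "(u n r :: 'a::field mpoly) \<noteq> 0"
  unfolding u_def by (simp add: var_nz)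

lemma u_polyring: "0 < n \<Longrightarrow> u n r \<in> polyring n"
  unfolding u_def by (intro mult_polyring var_polyring vx_range)

lemma NI_geq: assumes "n \<ge> 3" "p \<in> NI_cycle n" shows "geq 3 p"
  using assms(2) unfolding NI_eq[OF assms(1)]
  by (rule geq_ig[rotated]) (auto intro: hom_geq hom_u)

definition PP :: "nat \<Rightarrow> 'a::comm_ring_1 mpoly set \<Rightarrow> nat \<Rightarrow> 'a mpoly set" where
  "PP n I k = {(\<Prod>i<k. f i) | f. \<forall>i<k. f i \<in> I}"

lemma ideal_pow_PP: "ideal_pow n I k = ideal_gen n (PP n I k)"
  by (simp add: ideal_pow_def PP_def)

lemma PP_pow: "p \<in> PP n I k \<Longrightarrow> p \<in> ideal_pow n I k"
  unfolding ideal_pow_PP by (rule ig_base)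

lemma PP_zero: "1 \<in> PP n I 0"
  unfolding PP_def by auto

lemma PP_Suc: assumes "p \<in> PP n I a" "x \<in> I" shows "p * x \<in> PP n I (Suc a)"
proof -
  obtain f where f: "p = (\<Prod>i<a. f i)" "\<forall>i<a. f i \<in> I" using assms(1) unfolding PP_def by blast
  define f' where "f' = f(a := x)"
  have "(\<Prod>i<a. f' i) = (\<Prod>i<a. f i)" unfolding f'_def by (intro prod.cong) auto
  then have "(\<Prod>i<Suc a. f' i) = p * x" using f by (simp add: f'_def)
  moreover have "\<forall>i<Suc a. f' i \<in> I" using f assms(2) by (auto simp: f'_def less_Suc_eq)
  ultimately show ?thesis unfolding PP_def by (intro CollectI exI[of _ f']) simp
qed

lemma PP_prod: "finite S \<Longrightarrow> (\<And>x. x \<in> S \<Longrightarrow> h x \<in> I) \<Longrightarrow> p \<in> PP n I a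
   \<Longrightarrow> p * prod h S \<in> PP n I (a + card S)"
proof (induction S rule: finite_induct)
  case empty then show ?case by simp
next
  case (insert x S)
  then have "(p * prod h S) * h x \<in> PP n I (Suc (a + card S))" by (intro PP_Suc) auto
  then show ?case using insert by (simp add: mult_ac)
qed

lemma PP_power: "p \<in> PP n I a \<Longrightarrow> x \<in> I \<Longrightarrow> p * x ^ m \<in> PP n I (a + m)"
proof (induction m)
  case 0 then show ?case by simp
next
  case (Suc m)
  then have "(p * x ^ m) * x \<in> PP n I (Suc (a + m))" by (intro PP_Suc) auto
  then show ?case by (simp add: mult_ac)
qed

lemma geq_prod_lessThan: "(\<forall>i<k. geq d (f i)) \<Longrightarrow> geq (d * k) (\<Prod>i<k. f i)"
proof (induction k)
  case 0 then show ?case by (simp add: geq_def tdeg_def)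
next
  case (Suc k)
  then have "geq (d * k + d) ((\<Prod>i<k. f i) * f k)" by (intro geq_mult) auto
  then show ?case by (simp add: add.commute)
qed

lemma ideal_pow_geq:
  assumes "n \<ge> 3" "p \<in> ideal_pow n (NI_cycle n) k"
  shows "geq (3 * k) p"
  using assms(2) unfolding ideal_pow_def
  by (rule geq_ig[rotated]) (auto intro!: geq_prod_lessThan NI_geq[OF assms(1)])


lemma prime3: "prime (3::nat)"
proof -
  have "m = 1 \<or> m = 3" if "m dvd 3" for m :: nat
  proof -
    have "m \<le> 3" using that by (rule dvd_imp_le) simp
    moreover have "m \<noteq> 0" using that by (cases "m = 0") auto
    ultimately
    have "m = 1 \<or> m = 2 \<or> m = 3" by auto
    moreover have "\<not> (2::nat) dvd 3" by simp
    ultimately show ?thesis using that by auto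
  qed
  then show ?thesis unfolding prime_nat_iff by auto
qed

lemma coprime3: "\<not> 3 dvd (n::nat) \<Longrightarrow> coprime 3 n"
  by (rule prime_imp_coprime[OF prime3])

lemma inj_step3:
  assumes "\<not> 3 dvd n"
  shows "inj_on (\<lambda>s. (c + 3 * s) mod n) {..<n::nat}"
proof
  fix s s' assume s: "s \<in> {..<n}" "s' \<in> {..<n}" and e: "(c + 3 * s) mod n = (c + 3 * s') mod n"
  then have "[c + 3 * s = c + 3 * s'] (mod n)" by (simp add: cong_def)
  then have "[3 * s = 3 * s'] (mod n)" by (simp add: cong_add_lcancel_nat)
  then have "[s = s'] (mod n)" using cong_mult_lcancel_nat[OF coprime3[OF assms]] by simp
  then show "s = s'" using s by (simp add: cong_def)
qed

lemma surj_step3: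
  assumes "\<not> 3 dvd n" "0 < n"
  shows "(\<lambda>s. (c + 3 * s) mod n) ` {..<n} = {..<n::nat}"
  by (rule endo_inj_surj) (use inj_step3[OF assms(1)] assms(2) in auto)

lemma not1_step3:
  assumes "\<not> 3 dvd n" "n \<ge> 2" "s + 1 < n"
  shows "(4 + 3 * s) mod n \<noteq> (1::nat)"
proof
  assume "(4 + 3 * s) mod n = 1"
  then have "[1 + 3 * (s + 1) = 1 + 3 * 0] (mod n)" using assms by (simp add: cong_def)
  then have "[3 * (s + 1) = 3 * 0] (mod n)" by (simp only: cong_add_lcancel_nat)
  then have "[s + 1 = 0] (mod n)" using cong_mult_lcancel_nat[OF coprime3[OF assms(1)]] by blast
  then have "n dvd s + 1" by (simp add: cong_0_iff)
  then show False using assms(3) by (simp add: nat_dvd_not_less)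
qed

definition X :: "nat \<Rightarrow> nat \<Rightarrow> 'a::comm_ring_1 mpoly" where "X n r = var (vx n r)"

lemma X_mod: "X n (r mod n) = X n r"
  unfolding X_def vx_def by simp

lemma u_X: "u n r = X n (r + n - 1) * X n r * X n (r + 1)"
  unfolding u_def X_def ..

lemma shift_prod:
  assumes "0 < (n::nat)"
  shows "(\<Prod>r<n. h ((r + c) mod n)) = (\<Prod>r<n. (h r :: 'b::comm_monoid_mult))"
proof -
  have inj: "inj_on (\<lambda>r. (r + c) mod n) {..<n}"
  proof
    fix r r' assume rr: "r \<in> {..<n}" "r' \<in> {..<n}" and e: "(r + c) mod n = (r' + c) mod n"
    then have "[r + c = r' + c] (mod n)" by (simp add: cong_def)
    then have "[r = r'] (mod n)" by (simp add: cong_add_rcancel_nat)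
    then show "r = r'" using rr by (simp add: cong_def)
  qed
  have "(\<lambda>r. (r + c) mod n) ` {..<n} = {..<n}"
    by (rule endo_inj_surj) (use inj assms in auto)
  then have "bij_betw (\<lambda>r. (r + c) mod n) {..<n} {..<n}" using inj by (simp add: bij_betw_def)
  then show ?thesis by (rule prod.reindex_bij_betw)
qed

lemma shift_X_prod:
  assumes "0 < n"
  shows "(\<Prod>r<n. X n (r + c)) = (\<Prod>r<n. X n r)"
proof -
  have "(\<Prod>r<n. X n (r + c)) = (\<Prod>r<n. X n ((r + c) mod n))" by (simp add: X_mod)
  also have "\<dots> = (\<Prod>r<n. X n r)" by (rule shift_prod[OF assms])
  finally show ?thesis .
qed

lemma prod_u:
  assumes "0 < n"
  shows "(\<Prod>r<n. u n r) = (\<Prod>r<n. X n r) ^ 3"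
proof -
  have "(\<Prod>r<n. u n r) = (\<Prod>r<n. X n (r + (n - 1))) * (\<Prod>r<n. X n r) * (\<Prod>r<n. X n (r + 1))"
    unfolding u_X prod.distrib using assms by (simp add: add.assoc)
  also have "\<dots> = (\<Prod>r<n. X n r) ^ 3" unfolding shift_X_prod[OF assms]
    by (simp add: power3_eq_cube)
  finally show ?thesis .
qed

definition ee :: "nat \<Rightarrow> nat" where "ee r = (if r < 4 then 2 else 3)"

definition gg :: "nat \<Rightarrow> 'a::comm_ring_1 mpoly" where
  "gg n = (\<Prod>r<n. X n r ^ ee r)"

lemma gg_id:
  assumes "n \<ge> 4"
  shows "X n 3 * gg n * u n 1 = (\<Prod>r<n. u n r :: 'a::comm_ring_1 mpoly)"
proof -
  have "(\<Prod>r<n. X n r :: 'a mpoly) ^ 3 = (\<Prod>r<n. X n r ^ ee r * X n r ^ (if r < 4 then 1 else 0))"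
    unfolding prod_power_distrib by (intro prod.cong) (auto simp: ee_def power_add[symmetric])
  also have "\<dots> = gg n * (\<Prod>r<n. X n r ^ (if r < 4 then 1 else 0))"
    unfolding gg_def prod.distrib ..
  also have "(\<Prod>r<n. X n r ^ (if r < 4 then 1 else 0)) = (\<Prod>r<4. X n r ^ (if r < 4 then 1 else 0))"
    by (rule prod.mono_neutral_right) (use assms in auto)
  also have "\<dots> = (\<Prod>r<4. X n r)" by (intro prod.cong) auto
  also have "\<dots> = X n 0 * X n 1 * X n 2 * X n 3"
    by (simp add: numeral_eq_Suc lessThan_Suc mult_ac)
  also have "X n 0 = X n (1 + n - 1)"
    using X_mod[of n n] assms by simp
  finally have fin: "(\<Prod>r<n. X n r :: 'a mpoly) ^ 3 = X n 3 * gg n * u n 1"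
    unfolding u_X by (simp add: mult_ac numeral_2_eq_2)
  have pos: "0 < n" using assms by simp
  show ?thesis unfolding prod_u[OF pos] by (rule sym) (rule fin)
qed

lemma step_id:
  assumes "j \<ge> 1" "0 < n"
  shows "u n j * X n (j + 2) = u n (j + 1) * X n (j - 1)"
proof -
  have h1: "X n (j + n - 1) = X n (j - 1)"
  proof -
    have "j + n - 1 = (j - 1) + n" using assms by auto
    then show ?thesis by (metis X_mod mod_add_self2)
  qed
  moreover have h2: "X n (j + 1 + n - 1) = X n j"
    using assms by (metis X_mod add_diff_cancel_right' mod_add_self2 add.assoc add.commute)
  show ?thesis unfolding u_X h1 h2 by (simp add: mult_ac)
qed

lemma claim_t:
  assumes "0 < n"
  shows "(X n (3 + 3 * t) * gg n * (\<Prod>s<t. u n (4 + 3 * s)) :: 'a::comm_ring_1 mpoly)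
       = X n 3 * gg n * (\<Prod>s<t. u n (5 + 3 * s))"
proof (induction t)
  case 0 then show ?case by simp
next
  case (Suc t)
  have st: "(u n (4 + 3 * t) :: 'a mpoly) * X n (4 + 3 * t + 2) = u n (4 + 3 * t + 1) * X n (4 + 3 * t - 1)"
    by (rule step_id) (use assms in auto)
  have e1: "4 + 3 * t + 2 = 3 + 3 * Suc t" "4 + 3 * t - 1 = 3 + 3 * t" "4 + 3 * t + 1 = 5 + 3 * t"
    by auto
  have "(X n (3 + 3 * Suc t) * gg n * (\<Prod>s<Suc t. u n (4 + 3 * s)) :: 'a mpoly)
      = (u n (4 + 3 * t) * X n (3 + 3 * Suc t)) * (gg n * (\<Prod>s<t. u n (4 + 3 * s)))"
    by (simp add: mult_ac)
  also have "\<dots> = (u n (5 + 3 * t) * X n (3 + 3 * t)) * (gg n * (\<Prod>s<t. u n (4 + 3 * s)))"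
    using st unfolding e1 by metis
  also have "\<dots> = (X n (3 + 3 * t) * gg n * (\<Prod>s<t. u n (4 + 3 * s))) * u n (5 + 3 * t)"
    by (simp add: mult_ac)
  also have "\<dots> = (X n 3 * gg n * (\<Prod>s<t. u n (5 + 3 * s))) * u n (5 + 3 * t)"
    by (simp only: Suc.IH)
  also have "\<dots> = X n 3 * gg n * (\<Prod>s<Suc t. u n (5 + 3 * s))"
    by (simp add: mult_ac)
  finally show ?case .
qed


lemma witness:
  assumes n4: "n \<ge> 4" and nd: "\<not> 3 dvd n" and r: "r < n"
  shows "(X n r * gg n :: 'a::field mpoly) \<in> PP n (NI_cycle n) (n - 1)
         \<and> hom (3 * (n - 1)) (X n r * gg n :: 'a mpoly)"
proof -
  have pos: "0 < n" using n4 by simp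
  have "r \<in> (\<lambda>s. (3 + 3 * s) mod n) ` {..<n}" using surj_step3[OF nd pos, of 3] r by auto
  then obtain t where t: "t < n" "(3 + 3 * t) mod n = r" by auto
  define D where "D = (\<lambda>s. (4 + 3 * s) mod n) ` {..<t}"
  define A where "A = (\<lambda>s. (5 + 3 * s) mod n) ` {..<t}"
  define R where "R = {..<n} - {1} - D"
  have sub: "{..<t} \<subseteq> {..<n}" using t by auto
  have injD: "inj_on (\<lambda>s. (4 + 3 * s) mod n) {..<t}"
    using inj_on_subset[OF inj_step3[OF nd] sub] .
  have injA: "inj_on (\<lambda>s. (5 + 3 * s) mod n) {..<t}"
    using inj_on_subset[OF inj_step3[OF nd] sub] .
  have YD: "(\<Prod>s<t. u n (4 + 3 * s)) = (prod (u n) D :: 'a mpoly)"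
  proof -
    have "(\<Prod>s<t. u n (4 + 3 * s)) = (\<Prod>s<t. (u n ((4 + 3 * s) mod n) :: 'a mpoly))"
      by (intro prod.cong refl) (simp add: u_mod[OF pos])
    also have "\<dots> = prod (u n) D" unfolding D_def by (simp add: prod.reindex[OF injD])
    finally show ?thesis .
  qed
  have YA: "(\<Prod>s<t. u n (5 + 3 * s)) = (prod (u n) A :: 'a mpoly)"
  proof -
    have "(\<Prod>s<t. u n (5 + 3 * s)) = (\<Prod>s<t. (u n ((5 + 3 * s) mod n) :: 'a mpoly))"
      by (intro prod.cong refl) (simp add: u_mod[OF pos])
    also have "\<dots> = prod (u n) A" unfolding A_def by (simp add: prod.reindex[OF injA])
    finally show ?thesis .
  qed
  have Dsub: "D \<subseteq> {..<n} - {1}"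
  proof
    fix d assume "d \<in> D"
    then obtain s where s: "s < t" "d = (4 + 3 * s) mod n" unfolding D_def by auto
    have "d \<noteq> 1" using not1_step3[OF nd, of s] s t n4 by auto
    moreover have "d < n" using s pos by simp
    ultimately show "d \<in> {..<n} - {1}" by simp
  qed
  have cD: "card D = t" unfolding D_def using card_image[OF injD] by simp
  have cA: "card A = t" unfolding A_def using card_image[OF injA] by simp
  have cR: "card R = n - 1 - t" unfolding R_def
    using card_Diff_subset[OF finite_subset[OF Dsub] Dsub] cD n4 by simp
  have PU: "(\<Prod>r<n. u n r) = u n 1 * (prod (u n) R * prod (u n) D :: 'a mpoly)"
  proof -
    have "(\<Prod>r<n. u n r) = u n 1 * (prod (u n) ({..<n} - {1}) :: 'a mpoly)"
      by (rule prod.remove) (use n4 in auto)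
    also have "prod (u n) ({..<n} - {1}) = prod (u n) R * (prod (u n) D :: 'a mpoly)"
      unfolding R_def by (rule prod.subset_diff[OF Dsub]) simp
    finally show ?thesis .
  qed
  have cl: "X n (3 + 3 * t) * gg n * prod (u n) D = X n 3 * gg n * (prod (u n) A :: 'a mpoly)"
    using claim_t[OF pos, of t, where 'a='a] by (simp only: YD YA)
  have "(X n (3 + 3 * t) * gg n) * (u n 1 * prod (u n) D)
      = (X n (3 + 3 * t) * gg n * prod (u n) D) * (u n 1 :: 'a mpoly)"
    by (simp add: mult_ac)
  also have "\<dots> = (X n 3 * gg n * prod (u n) A) * u n 1" unfolding cl ..
  also have "\<dots> = (X n 3 * gg n * u n 1) * (prod (u n) A :: 'a mpoly)"
    by (simp add: mult_ac)
  also have "\<dots> = (\<Prod>r<n. u n r) * (prod (u n) A :: 'a mpoly)"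
    unfolding gg_id[OF n4] ..
  also have "\<dots> = (prod (u n) R * (prod (u n) A :: 'a mpoly)) * (u n 1 * prod (u n) D)"
    unfolding PU by (simp add: mult_ac)
  finally have lhs: "(X n (3 + 3 * t) * gg n) * (u n 1 * prod (u n) D)
      = (prod (u n) R * (prod (u n) A :: 'a mpoly)) * (u n 1 * prod (u n) D)" .
  have nz: "u n 1 * prod (u n) D \<noteq> (0 :: 'a mpoly)"
    using finite_subset[OF Dsub] by (simp add: prod_zero_iff u_nz)
  have eq: "X n (3 + 3 * t) * gg n = prod (u n) R * (prod (u n) A :: 'a mpoly)"
    by (rule mult_right_cancel[THEN iffD1, OF nz lhs])
  have Xr: "X n (3 + 3 * t) = (X n r :: 'a mpoly)" using X_mod[of n "3 + 3 * t", where 'a='a] t by simp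
  have finR: "finite R" unfolding R_def by simp
  have finA: "finite A" unfolding A_def by simp
  have "(1 * prod (u n) R :: 'a mpoly) \<in> PP n (NI_cycle n) (0 + card R)"
    by (rule PP_prod[OF finR _ PP_zero]) (use n4 in \<open>auto intro: u_NI\<close>)
  then have "(1 * prod (u n) R * prod (u n) A :: 'a mpoly) \<in> PP n (NI_cycle n) (0 + card R + card A)"
    by (rule PP_prod[OF finA, rotated]) (use n4 in \<open>auto intro: u_NI\<close>)
  moreover have "0 + card R + card A = n - 1" using cR cA t by simp
  ultimately have m: "(X n r * gg n :: 'a mpoly) \<in> PP n (NI_cycle n) (n - 1)"
    using eq Xr by simp
  have "hom (3 * card R + 3 * card A) (prod (u n) R * (prod (u n) A :: 'a mpoly))"
    by (intro hom_mult hom_prod finR finA hom_u)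
  moreover have "3 * card R + 3 * card A = 3 * (n - 1)" using cR cA t by simp
  ultimately have "hom (3 * (n - 1)) (X n r * gg n :: 'a mpoly)" using eq Xr by simp
  then show ?thesis using m by simp
qed

definition gk :: "nat \<Rightarrow> nat \<Rightarrow> 'a::comm_ring_1 mpoly" where
  "gk n k = gg n * u n 0 ^ (k - (n - 1))"

lemma witness_k:
  assumes n4: "n \<ge> 4" and nd: "\<not> 3 dvd n" and r: "r < n" and k: "k \<ge> n - 1"
  shows "(X n r * gk n k :: 'a::field mpoly) \<in> PP n (NI_cycle n) k
         \<and> hom (3 * k) (X n r * gk n k :: 'a mpoly)"
proof -
  note w = witness[OF n4 nd r, where 'a='a]
  have "(X n r * gg n * u n 0 ^ (k - (n - 1)) :: 'a mpoly) \<in> PP n (NI_cycle n) (n - 1 + (k - (n - 1)))"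
    by (rule PP_power) (use w n4 in \<open>auto intro: u_NI\<close>)
  moreover have "hom (3 * (n - 1) + 3 * (k - (n - 1))) (X n r * gg n * u n 0 ^ (k - (n - 1)) :: 'a mpoly)"
    by (intro hom_mult hom_pow hom_u conjunct2[OF w])
  moreover have "n - 1 + (k - (n - 1)) = k" "3 * (n - 1) + 3 * (k - (n - 1)) = 3 * k" using k by auto
  ultimately show ?thesis unfolding gk_def by (simp add: mult.assoc)
qed


definition ismono :: "'a::comm_ring_1 mpoly \<Rightarrow> bool" where
  "ismono p \<longleftrightarrow> (\<exists>m. p = Poly_Mapping.single m 1)"

lemma ismono_one: "ismono 1"
  unfolding ismono_def by (rule exI[of _ 0]) simp

lemma ismono_mult: "ismono p \<Longrightarrow> ismono q \<Longrightarrow> ismono (p * q)"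
  unfolding ismono_def by (auto simp: mult_single)

lemma ismono_var: "ismono (var i)"
  unfolding ismono_def var_def by auto

lemma ismono_prod: "(\<And>x. x \<in> S \<Longrightarrow> ismono (f x)) \<Longrightarrow> ismono (prod f S)"
  by (induction S rule: infinite_finite_induct) (auto simp: ismono_one ismono_mult)

lemma ismono_pow: "ismono p \<Longrightarrow> ismono (p ^ k)"
  by (induction k) (auto simp: ismono_one ismono_mult)

lemma ismono_u: "ismono (u n r)"
  unfolding u_def by (intro ismono_mult ismono_var)

lemma ismono_gk: "ismono (gk n k)"
  unfolding gk_def gg_def X_def by (intro ismono_mult ismono_pow ismono_prod ismono_var ismono_u)

lemma X_polyring: "0 < n \<Longrightarrow> X n r \<in> polyring n"
  unfolding X_def by (intro var_polyring vx_range)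

lemma gk_polyring: "0 < n \<Longrightarrow> gk n k \<in> polyring n"
  unfolding gk_def gg_def by (intro mult_polyring pow_polyring prod_polyring X_polyring u_polyring)

lemma pm_add_eq_0: "(a::nat \<Rightarrow>\<^sub>0 nat) + b = 0 \<Longrightarrow> b = 0"
  by (rule poly_mapping_eqI) (metis add_is_0 lookup_add lookup_zero)

lemma lookup0_mult: assumes "Poly_Mapping.lookup p 0 = 0"
  shows "Poly_Mapping.lookup (q * p :: 'a::comm_ring_1 mpoly) 0 = 0"
proof (rule ccontr)
  assume "Poly_Mapping.lookup (q * p) 0 \<noteq> 0"
  then have "0 \<in> Poly_Mapping.keys (q * p)" by (simp add: in_keys_iff)
  then obtain a b where "0 = a + b" "b \<in> Poly_Mapping.keys p" using keys_mult[of q p] by blast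
  then have "0 \<in> Poly_Mapping.keys p" using pm_add_eq_0 by metis
  then show False using assms by (simp add: in_keys_iff)
qed

lemma ig_lookup0:
  assumes "\<And>g. g \<in> G \<Longrightarrow> Poly_Mapping.lookup g 0 = 0" "p \<in> ideal_gen n G"
  shows "Poly_Mapping.lookup (p :: 'a::comm_ring_1 mpoly) 0 = 0"
proof -
  obtain F r where "p = (\<Sum>g\<in>F. r g * g)" "F \<subseteq> G" using assms(2) unfolding ideal_gen_def by blast
  then show ?thesis using assms(1) by (auto simp: lookup_sum lookup0_mult intro!: sum.neutral)
qed

lemma pm_expand: "p = (\<Sum>m\<in>Poly_Mapping.keys p. Poly_Mapping.single m (Poly_Mapping.lookup p m))"
proof (rule poly_mapping_eqI)
  fix k
  have "(\<Sum>m\<in>Poly_Mapping.keys p. Poly_Mapping.lookup (Poly_Mapping.single m (Poly_Mapping.lookup p m)) k)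
      = (\<Sum>m\<in>Poly_Mapping.keys p. if m = k then Poly_Mapping.lookup p m else 0)"
    by (intro sum.cong refl) (simp add: lookup_single when_def)
  also have "\<dots> = Poly_Mapping.lookup p k" by (simp add: in_keys_iff)
  finally show "Poly_Mapping.lookup p k = Poly_Mapping.lookup (\<Sum>m\<in>Poly_Mapping.keys p. Poly_Mapping.single m (Poly_Mapping.lookup p m)) k"
    by (simp add: lookup_sum)
qed

lemma term_max:
  assumes "m \<noteq> 0" "Poly_Mapping.keys m \<subseteq> {1..n}"
  shows "(Poly_Mapping.single m c :: 'a::comm_ring_1 mpoly) \<in> max_ideal n"
proof -
  obtain v where v: "v \<in> Poly_Mapping.keys m" using assms(1) by (metis keys_eq_empty ex_in_conv)
  define m' where "m' = m - Poly_Mapping.single v 1"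
  have "m = m' + Poly_Mapping.single v 1"
  proof (rule poly_mapping_eqI)
    fix k show "Poly_Mapping.lookup m k = Poly_Mapping.lookup (m' + Poly_Mapping.single v 1) k"
      using v unfolding m'_def by (auto simp: lookup_add lookup_minus lookup_single when_def in_keys_iff)
  qed
  then have e: "(Poly_Mapping.single m c :: 'a mpoly) = Poly_Mapping.single m' c * var v"
    unfolding var_def by (simp add: mult_single)
  have "Poly_Mapping.keys m' \<subseteq> Poly_Mapping.keys m"
    unfolding m'_def by (auto simp: in_keys_iff lookup_minus)
  then have "(Poly_Mapping.single m' c :: 'a mpoly) \<in> polyring n"
    using assms(2) unfolding polyring_def by auto
  moreover have "var v \<in> var ` {1..n}" using v assms(2) by auto
  ultimately show ?thesis unfolding e max_ideal_def by (intro ig_gen)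
qed

definition M0 :: "nat \<Rightarrow> 'a::comm_ring_1 mpoly set" where
  "M0 n = {p \<in> polyring n. Poly_Mapping.lookup p 0 = 0}"

lemma single_nz: "Poly_Mapping.single i (1::nat) \<noteq> 0"
  by (metis lookup_single_eq one_neq_zero lookup_zero)

lemma lookup_var0: "Poly_Mapping.lookup (var i :: 'a::comm_ring_1 mpoly) 0 = 0"
  unfolding var_def using single_nz[of i] by (simp add: lookup_single when_def)

lemma max_M0: "max_ideal n = (M0 n :: 'a::comm_ring_1 mpoly set)"
proof
  show "max_ideal n \<subseteq> (M0 n :: 'a mpoly set)"
  proof
    fix p :: "'a mpoly" assume p: "p \<in> max_ideal n"
    have "p \<in> polyring n" using p ig_polyring[of "var ` {1..n}" n] var_polyring
      unfolding max_ideal_def by blast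
    moreover have "Poly_Mapping.lookup p 0 = 0"
      using p unfolding max_ideal_def by (rule ig_lookup0[rotated]) (auto simp: lookup_var0)
    ultimately show "p \<in> M0 n" by (simp add: M0_def)
  qed
next
  show "M0 n \<subseteq> (max_ideal n :: 'a mpoly set)"
  proof
    fix p :: "'a mpoly" assume p: "p \<in> M0 n"
    have "p = (\<Sum>m\<in>Poly_Mapping.keys p. Poly_Mapping.single m (Poly_Mapping.lookup p m))"
      by (rule pm_expand)
    also have "\<dots> \<in> max_ideal n"
    proof (rule ig_sum[of _ _ n "var ` {1..n}", folded max_ideal_def])
      fix m assume m: "m \<in> Poly_Mapping.keys p"
      then have "m \<noteq> 0" using p by (auto simp: M0_def in_keys_iff)
      moreover have "Poly_Mapping.keys m \<subseteq> {1..n}" using p m by (auto simp: M0_def polyring_def)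
      ultimately show "Poly_Mapping.single m (Poly_Mapping.lookup p m) \<in> max_ideal n"
        by (rule term_max)
    qed
    finally show "p \<in> max_ideal n" .
  qed
qed

lemma lookup0_prod:
  "Poly_Mapping.lookup (a * b :: 'a::comm_ring_1 mpoly) 0 = Poly_Mapping.lookup a 0 * Poly_Mapping.lookup b 0"
proof -
  define a0 where "a0 = Poly_Mapping.lookup a 0"
  define b0 where "b0 = Poly_Mapping.lookup b 0"
  define a' where "a' = a - Poly_Mapping.single 0 a0"
  define b' where "b' = b - Poly_Mapping.single 0 b0"
  have a'0: "Poly_Mapping.lookup a' 0 = 0" unfolding a'_def a0_def by (simp add: lookup_minus)
  have b'0: "Poly_Mapping.lookup b' 0 = 0" unfolding b'_def b0_def by (simp add: lookup_minus)
  have "a * b = Poly_Mapping.single 0 a0 * Poly_Mapping.single 0 b0 + Poly_Mapping.single 0 a0 * b' + b * a'"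
    unfolding a'_def b'_def by (simp add: algebra_simps)
  then have "Poly_Mapping.lookup (a * b) 0 = a0 * b0 + Poly_Mapping.lookup (Poly_Mapping.single 0 a0 * b') 0
       + Poly_Mapping.lookup (b * a') 0"
    by (simp add: lookup_add mult_single)
  then show ?thesis using lookup0_mult[OF a'0, of b] lookup0_mult[OF b'0, of "Poly_Mapping.single 0 a0"]
    by (simp add: a0_def b0_def)
qed

lemma lookup_mult_single:
  "Poly_Mapping.lookup (f * Poly_Mapping.single m 1 :: 'a::comm_ring_1 mpoly) m = Poly_Mapping.lookup f 0"
proof -
  define f0 where "f0 = Poly_Mapping.lookup f 0"
  define f' where "f' = f - Poly_Mapping.single 0 f0"
  have f'0: "Poly_Mapping.lookup f' 0 = 0" unfolding f'_def f0_def by (simp add: lookup_minus)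
  have "f * Poly_Mapping.single m 1 = Poly_Mapping.single m f0 + f' * Poly_Mapping.single m 1"
    unfolding f'_def by (simp add: algebra_simps mult_single)
  moreover have "m \<notin> Poly_Mapping.keys (f' * Poly_Mapping.single m 1)"
  proof
    assume "m \<in> Poly_Mapping.keys (f' * Poly_Mapping.single m 1)"
    then obtain a b where ab: "m = a + b" "a \<in> Poly_Mapping.keys f'" "b \<in> Poly_Mapping.keys (Poly_Mapping.single m (1::'a))"
      using keys_mult[of f' "Poly_Mapping.single m 1"] by blast
    then have "b = m" by (simp split: if_splits)
    then have "a = 0" using ab(1) by (metis add_0 add_right_cancel)
    then show False using ab(2) f'0 by (simp add: in_keys_iff)
  qed
  ultimately show ?thesis by (simp add: lookup_add in_keys_iff f0_def)
qed

lemma max_prime: "prime_ideal n (max_ideal n :: 'a::field mpoly set)"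
  unfolding prime_ideal_def
proof (intro conjI ballI impI)
  show "ideal_gen n (max_ideal n) = (max_ideal n :: 'a mpoly set)"
  proof
    show "ideal_gen n (max_ideal n) \<subseteq> (max_ideal n :: 'a mpoly set)"
    proof
      fix p :: "'a mpoly" assume p: "p \<in> ideal_gen n (max_ideal n)"
      have "p \<in> polyring n" using p ig_polyring[of "max_ideal n" n] unfolding max_M0 M0_def by blast
      moreover have "Poly_Mapping.lookup p 0 = 0"
        using p by (rule ig_lookup0[rotated]) (auto simp: max_M0 M0_def)
      ultimately show "p \<in> max_ideal n" by (simp add: max_M0 M0_def)
    qed
    show "max_ideal n \<subseteq> ideal_gen n (max_ideal n :: 'a mpoly set)" using ig_base by blast
  qed
  have "(1::'a mpoly) \<notin> max_ideal n" by (simp add: max_M0 M0_def lookup_one)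
  then show "max_ideal n \<noteq> (polyring n :: 'a mpoly set)"
    using one_polyring[of n, where 'a='a] by blast
  fix a b :: "'a mpoly" assume "a \<in> polyring n" "b \<in> polyring n" "a * b \<in> max_ideal n"
  then show "a \<in> max_ideal n \<or> b \<in> max_ideal n" by (auto simp: max_M0 M0_def lookup0_prod)
qed

lemma ig_mult_ideal:
  assumes "f \<in> ideal_gen n G" "\<And>x. x \<in> G \<Longrightarrow> x * g \<in> ideal_gen n H"
  shows "f * g \<in> ideal_gen n H"
proof -
  obtain F r where F: "f = (\<Sum>x\<in>F. r x * x)" "F \<subseteq> G" "\<forall>x\<in>F. r x \<in> polyring n"
    using assms(1) unfolding ideal_gen_def by blast
  have "f * g = (\<Sum>x\<in>F. r x * (x * g))" unfolding F(1) by (simp add: sum_distrib_right mult.assoc)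
  also have "\<dots> \<in> ideal_gen n H"
  proof (rule ig_sum)
    fix x assume "x \<in> F"
    then show "r x * (x * g) \<in> ideal_gen n H" using F by (intro ig_mult assms(2)) auto
  qed
  finally show ?thesis .
qed

lemma main_k:
  assumes n4: "n \<ge> 4" and nd: "\<not> 3 dvd n" and k: "k \<ge> n - 1"
  shows "depth n (ideal_pow n (NI_cycle n :: 'a::field mpoly set) k) = 0
     \<and> max_ideal n = {f \<in> polyring n. f * gk n k \<in> ideal_pow n (NI_cycle n :: 'a mpoly set) k}"
proof -
  let ?J = "ideal_pow n (NI_cycle n :: 'a mpoly set) k"
  have pos: "0 < n" using n4 by simp
  have n3: "3 \<le> n" using n4 by simp
  obtain mk where mk: "(gk n k :: 'a mpoly) = Poly_Mapping.single mk 1"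
    using ismono_gk[of n k, where 'a='a] unfolding ismono_def by blast
  have vx0: "vx n 0 \<in> {1..n}" using vx_range[OF pos] .
  have w0: "hom (3 * k) (X n 0 * gk n k :: 'a mpoly)" using witness_k[OF n4 nd pos k, where 'a='a] by simp
  have "X n 0 * gk n k = (Poly_Mapping.single (Poly_Mapping.single (vx n 0) 1 + mk) 1 :: 'a mpoly)"
    unfolding X_def var_def mk by (simp add: mult_single)
  then have "tdeg (Poly_Mapping.single (vx n 0) 1 + mk) = 3 * k" using w0 by (simp add: hom_def)
  then have tmk: "tdeg mk + 1 = 3 * k" unfolding tdeg_add tdeg_single by simp
  have gkp: "(gk n k :: 'a mpoly) \<in> polyring n" by (rule gk_polyring[OF pos])
  have mkk: "mk \<in> Poly_Mapping.keys (gk n k :: 'a mpoly)" unfolding mk by simp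
  have a: "f * gk n k \<in> ?J" if "f \<in> max_ideal n" for f :: "'a mpoly"
  proof -
    have "f * gk n k \<in> ideal_gen n (PP n (NI_cycle n) k)"
    proof (rule ig_mult_ideal[OF that[unfolded max_ideal_def]])
      fix x :: "'a mpoly" assume "x \<in> var ` {1..n}"
      then obtain i where i: "i \<in> {1..n}" "x = var i" by auto
      have "x = X n (i - 1)" using i by (auto simp: X_def vx_def)
      moreover have "i - 1 < n" using i by auto
      ultimately have "x * gk n k \<in> PP n (NI_cycle n) k" using witness_k[OF n4 nd _ k, where 'a='a] by simp
      then show "x * gk n k \<in> ideal_gen n (PP n (NI_cycle n) k)" by (rule ig_base)
    qed
    then show ?thesis by (simp add: ideal_pow_PP)
  qed
  have c: "gk n k \<notin> ideal_gen n ?J"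
  proof
    assume "gk n k \<in> ideal_gen n ?J"
    then have "geq (3 * k) (gk n k :: 'a mpoly)"
      by (rule geq_ig[rotated]) (auto intro: ideal_pow_geq[OF n3])
    then show False using mkk tmk unfolding geq_def by fastforce
  qed
  have b: "Poly_Mapping.lookup f 0 = 0" if "f \<in> polyring n" "f * gk n k \<in> ?J" for f :: "'a mpoly"
  proof (rule ccontr)
    assume f0: "Poly_Mapping.lookup f 0 \<noteq> 0"
    have "Poly_Mapping.lookup (f * gk n k) mk \<noteq> 0" unfolding mk lookup_mult_single using f0 .
    then have "mk \<in> Poly_Mapping.keys (f * gk n k)" by (simp add: in_keys_iff)
    moreover have "geq (3 * k) (f * gk n k)" using that(2) by (auto intro: ideal_pow_geq[OF n3])
    ultimately show False using tmk unfolding geq_def by fastforce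
  qed
  have eq: "max_ideal n = {f \<in> polyring n. f * gk n k \<in> ?J}"
  proof
    show "max_ideal n \<subseteq> {f \<in> polyring n. f * gk n k \<in> ?J}"
      using a by (auto simp: max_M0 M0_def)
    show "{f \<in> polyring n. f * gk n k \<in> ?J} \<subseteq> max_ideal n"
      using b by (auto simp: max_M0 M0_def)
  qed
  have nil: "fs = []" if "regular_seq n ?J fs" for fs
  proof (rule ccontr)
    assume "fs \<noteq> []"
    then have f: "fs ! 0 \<in> max_ideal n" "nonzerodiv_mod n (ideal_gen n (?J \<union> set (take 0 fs))) (fs ! 0)"
      using that unfolding regular_seq_def by auto
    have "fs ! 0 * gk n k \<in> ideal_gen n ?J" using a[OF f(1)] by (rule ig_base)
    then have "gk n k \<in> ideal_gen n ?J" using f(2) gkp unfolding nonzerodiv_mod_def by auto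
    then show False using c by simp
  qed
  have "depth n ?J = 0"
  proof -
    have "{enat (length fs) | fs. regular_seq n ?J fs} \<subseteq> {0}" using nil by (auto simp: zero_enat_def)
    then have "depth n ?J \<le> 0" unfolding depth_def by (intro Sup_least) auto
    then show ?thesis by simp
  qed
  then show ?thesis using eq by simp
qed

theorem corollary3p7:
  fixes n :: nat
  assumes "n \<ge> 4" and "n mod 3 \<noteq> 0"
  shows "depth n (ideal_pow n (NI_cycle n :: 'a::field mpoly set) (n - 1)) = 0
     \<and> max_ideal n \<in> Ass n (ideal_pow n (NI_cycle n :: 'a mpoly set) (n - 1))
     \<and> ((\<lambda>k. depth n (ideal_pow n (NI_cycle n :: 'a mpoly set) k)) \<longlongrightarrow> 0) sequentially"
proof -
  have nd: "\<not> 3 dvd n" using assms(2) by (simp add: dvd_eq_mod_eq_0)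
  note m = main_k[OF assms(1) nd order.refl, where 'a='a]
  have "max_ideal n \<in> Ass n (ideal_pow n (NI_cycle n :: 'a mpoly set) (n - 1))"
    unfolding Ass_def using max_prime[of n, where 'a='a] m gk_polyring[of n "n - 1", where 'a='a] assms(1)
    by auto
  moreover have "\<forall>\<^sub>F k in sequentially. depth n (ideal_pow n (NI_cycle n :: 'a mpoly set) k) = 0"
    unfolding eventually_sequentially using main_k[OF assms(1) nd, where 'a='a] by blast
  ultimately show ?thesis using m by (simp add: tendsto_eventually)
qed

end
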